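(* Let $(\Omega,\mu)$ be a probability space, $\tau:\Omega\to\Omega$ an ergodic measure-preserving map, and $b:\mathbb{N}\times\Omega\to\mathbb{R}$ a measurable function with $b(0,\omega)=0$, $b(n+m,\omega)\leq b(n,\omega)+b(m,\tau^n\omega)$ for all $n,m>0$ and a.e. $\omega$, and $b(1,\cdot)$ integrable, with finite asymptotic average $A=\inf_n\frac1n\int b(n,\omega)\,d\mu$. Let $\delta>0$. Then there exists $c>0$ such that for almost every $\omega$ $$\overline{\mathrm{dens}}\{n\in\mathbb{N}:\ \exists \ell\in[1,n],\ b(n,\omega)-b(n-\ell,\omega)\leq (A-c)\ell\}\leq\delta.$$
   Context: $\overline{\mathrm{dens}}(U)=\limsup_{N\to\infty}\#(U\cap[0,N-1])/N$ is the upper asymptotic density of $U\subset\mathbb{N}$. *)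

theory Defs
  imports "HOL-Probability.Probability"
begin

definition measure_preserving_map :: "'a measure \<Rightarrow> ('a \<Rightarrow> 'a) \<Rightarrow> bool" where
  "measure_preserving_map M T \<longleftrightarrow> T \<in> M \<rightarrow>\<^sub>M M \<and>
     (\<forall>A \<in> sets M. emeasure M (T -` A \<inter> space M) = emeasure M A)"

definition ergodic_map :: "'a measure \<Rightarrow> ('a \<Rightarrow> 'a) \<Rightarrow> bool" where
  "ergodic_map M T \<longleftrightarrow> measure_preserving_map M T \<and>
     (\<forall>A \<in> sets M. T -` A \<inter> space M = A \<longrightarrow> measure M A = 0 \<or> measure M A = 1)"

definition upper_density :: "nat set \<Rightarrow> ereal" where
  "upper_density U = limsup (\<lambda>N. ereal (real (card (U \<inter> {0..<N})) / real N))"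

text \<open>Extended-real integral (positive part minus negative part), defined whenever
  at least one part is finite; used to express the asymptotic average
  inf_n (1/n) int b(n) without presupposing integrability of b(n).\<close>
definition ereal_integral :: "'a measure \<Rightarrow> ('a \<Rightarrow> real) \<Rightarrow> ereal" where
  "ereal_integral M f =
     enn2ereal (\<integral>\<^sup>+ x. ennreal (f x) \<partial>M) - enn2ereal (\<integral>\<^sup>+ x. ennreal (- f x) \<partial>M)"

end

theory Submission
  imports Defs
begin


lemma mp_funpow_meas:
  assumes "T \<in> M \<rightarrow>\<^sub>M M" shows "(T ^^ n) \<in> M \<rightarrow>\<^sub>M M"
  by (induction n) (auto intro: measurable_compose[OF _ assms])

lemma mp_distr:
  assumes "measure_preserving_map M T" shows "distr M M T = M"
proof -
  have T: "T \<in> M \<rightarrow>\<^sub>M M" using assms unfolding measure_preserving_map_def by auto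
  show ?thesis
    by (rule measure_eqI) (use assms in \<open>auto simp: emeasure_distr[OF T] measure_preserving_map_def\<close>)
qed

lemma mp_distr_funpow:
  assumes "measure_preserving_map M T" shows "distr M M (T ^^ n) = M"
proof (induction n)
  case 0 then show ?case by (simp add: distr_id2)
next
  case (Suc n)
  have T: "T \<in> M \<rightarrow>\<^sub>M M" using assms unfolding measure_preserving_map_def by auto
  have "distr M M (T ^^ Suc n) = distr M M (T ^^ n \<circ> T)" by (simp only: funpow_Suc_right)
  also have "\<dots> = distr (distr M M T) M (T ^^ n)"
    using distr_distr[OF mp_funpow_meas[OF T] T] by simp
  also have "\<dots> = M" using mp_distr[OF assms] Suc by simp
  finally show ?case .
qed

lemma mp_AE:
  assumes "measure_preserving_map M T" "AE x in M. P x"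
  shows "AE x in M. P ((T ^^ n) x)"
proof -
  have T: "T \<in> M \<rightarrow>\<^sub>M M" using assms unfolding measure_preserving_map_def by auto
  have "AE x in distr M M (T ^^ n). P x" using assms(2) by (subst mp_distr_funpow[OF assms(1)])
  then show ?thesis by (rule AE_distrD[OF mp_funpow_meas[OF T, of n]])
qed

lemma mp_integrable:
  fixes g :: "'a \<Rightarrow> real"
  assumes "measure_preserving_map M T" "integrable M g"
  shows "integrable M (\<lambda>x. g ((T ^^ n) x))"
proof -
  have T: "T \<in> M \<rightarrow>\<^sub>M M" using assms unfolding measure_preserving_map_def by auto
  show ?thesis
    using integrable_distr_eq[OF mp_funpow_meas[OF T], of g] assms
    by (simp add: mp_distr_funpow[OF assms(1)])
qed

lemma mp_integral:
  fixes g :: "'a \<Rightarrow> real"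
  assumes "measure_preserving_map M T" "g \<in> borel_measurable M"
  shows "integral\<^sup>L M (\<lambda>x. g ((T ^^ n) x)) = integral\<^sup>L M g"
proof -
  have T: "T \<in> M \<rightarrow>\<^sub>M M" using assms unfolding measure_preserving_map_def by auto
  show ?thesis
    using integral_distr[OF mp_funpow_meas[OF T] assms(2)]
    by (simp add: mp_distr_funpow[OF assms(1)])
qed

lemma mp_measure:
  assumes "measure_preserving_map M T" "B \<in> sets M"
  shows "measure M ((T ^^ n) -` B \<inter> space M) = measure M B"
proof -
  have T: "T \<in> M \<rightarrow>\<^sub>M M" using assms unfolding measure_preserving_map_def by auto
  have "emeasure M ((T ^^ n) -` B \<inter> space M) = emeasure M B"
    using emeasure_distr[OF mp_funpow_meas[OF T, of n] assms(2)] mp_distr_funpow[OF assms(1), of n]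
    by simp
  then show ?thesis by (simp add: measure_def)
qed



lemma inv_01:
  assumes PS: "prob_space M" and erg: "ergodic_map M T" and S: "S \<in> sets M"
    and sub: "AE x in M. T x \<in> S \<longrightarrow> x \<in> S"
  shows "measure M S = 0 \<or> measure M S = 1"
proof -
  interpret prob_space M by fact
  have mp: "measure_preserving_map M T" using erg unfolding ergodic_map_def by auto
  have T[measurable]: "T \<in> M \<rightarrow>\<^sub>M M" using mp unfolding measure_preserving_map_def by auto
  have Tn[measurable]: "\<And>n. T ^^ n \<in> M \<rightarrow>\<^sub>M M" by (rule mp_funpow_meas[OF T])
  define P where "P = T -` S \<inter> space M"
  have P[measurable]: "P \<in> sets M" unfolding P_def using measurable_sets[OF T S] .
  have mP: "measure M P = measure M S" using mp_measure[OF mp S, of 1] by (simp add: P_def)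
  have AE1: "AE x in M. x \<in> P \<longrightarrow> x \<in> S" using sub by (auto simp: P_def)
  have "measure M (P \<union> S) = measure M S"
    by (rule measure_eq_AE) (use AE1 S P in \<open>auto\<close>)
  moreover have "measure M (P \<union> S) = measure M P + measure M (S - P)"
  proof -
    have "P \<union> S = P \<union> (S - P)" by auto
    then show ?thesis using finite_measure_Union[of P "S - P"] S P by auto
  qed
  ultimately have "measure M (S - P) = 0" using mP by simp
  then have "emeasure M (S - P) = 0" by (simp add: emeasure_eq_measure)
  then have "S - P \<in> null_sets M" using S P by (intro null_setsI) auto
  then have "AE x in M. x \<notin> S - P" by (rule AE_not_in)
  then have base: "AE x in M. x \<in> S \<longleftrightarrow> T x \<in> S"
    using AE1 AE_space by eventually_elim (auto simp: P_def)
  have step: "\<And>n. AE x in M. (T ^^ n) x \<in> S \<longleftrightarrow> x \<in> S"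
  proof -
    fix n show "AE x in M. (T ^^ n) x \<in> S \<longleftrightarrow> x \<in> S"
    proof (induction n)
      case 0 then show ?case by simp
    next
      case (Suc n)
      have "AE x in M. (T ^^ n) x \<in> S \<longleftrightarrow> T ((T ^^ n) x) \<in> S"
        by (rule mp_AE[OF mp base])
      with Suc show ?case by eventually_elim auto
    qed
  qed
  then have all: "AE x in M. \<forall>n. (T ^^ n) x \<in> S \<longleftrightarrow> x \<in> S"
    by (simp add: AE_all_countable)
  define S' where "S' = {x \<in> space M. \<forall>m. \<exists>n\<ge>m. (T ^^ n) x \<in> S}"
  have S'eq: "S' = (\<Inter>m. \<Union>n\<in>{m..}. (T ^^ n) -` S \<inter> space M)"
    unfolding S'_def by (auto simp: Bex_def Ball_def)
  have S'[measurable]: "S' \<in> sets M" unfolding S'eq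
    by (intro sets.countable_INT' sets.countable_UN' image_subsetI measurable_sets[OF Tn S]) auto
  have inv: "T -` S' \<inter> space M = S'"
  proof (rule set_eqI, rule iffI)
    fix x assume x0: "x \<in> T -` S' \<inter> space M"
    then have x: "x \<in> space M" "T x \<in> S'" by auto
    show "x \<in> S'" unfolding S'_def
    proof (safe intro!: x(1))
      fix m
      from x(2) obtain n where "n \<ge> m" "(T ^^ n) (T x) \<in> S" unfolding S'_def by blast
      then show "\<exists>n\<ge>m. (T ^^ n) x \<in> S"
        by (intro exI[of _ "Suc n"]) (auto simp: funpow_swap1)
    qed
  next
    fix x assume x: "x \<in> S'"
    then have xs: "x \<in> space M" by (simp add: S'_def)
    then have "T x \<in> space M" by (meson T measurable_space)
    moreover have "\<exists>n\<ge>m. (T ^^ n) (T x) \<in> S" for m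
    proof -
      from x obtain n where n: "n \<ge> Suc m" "(T ^^ n) x \<in> S" unfolding S'_def by blast
      then obtain k where "n = Suc k" by (cases n) auto
      with n show ?thesis
        by (intro exI[of _ k]) (auto simp: funpow_swap1)
    qed
    ultimately show "x \<in> T -` S' \<inter> space M" by (simp add: S'_def xs)
  qed
  have "measure M S' = 0 \<or> measure M S' = 1"
    using erg S' inv unfolding ergodic_map_def by auto
  moreover have "measure M S' = measure M S"
    by (rule measure_eq_AE[OF _ S' S]) (use all AE_space in \<open>eventually_elim; auto simp: S'_def\<close>)
  ultimately show ?thesis by simp
qed



lemma cover_fwd:
  fixes Y :: "nat \<Rightarrow> real" and bad :: "nat \<Rightarrow> bool"
  assumes t: "t \<ge> 0" and mono: "\<And>k j. Y k \<le> Y (k + j)"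
    and good: "\<And>k. \<not> bad k \<Longrightarrow> \<exists>l\<in>{1..L}. Y (k + l) - Y k \<ge> t * real l"
    and kN: "k \<le> N"
  shows "Y N - Y k \<ge> t * (real N - real k - real L - real (card {j\<in>{k..<N}. bad j}))"
  using kN
proof (induction "N - k" arbitrary: k rule: less_induct)
  case less
  show ?case
  proof (cases "k = N")
    case True
    then show ?thesis using t by (simp add: mult_nonneg_nonpos)
  next
    case False
    with less.prems have kN: "k < N" by simp
    show ?thesis
    proof (cases "bad k")
      case True
      have IH: "Y N - Y (Suc k) \<ge> t * (real N - real (Suc k) - real L - real (card {j\<in>{Suc k..<N}. bad j}))"
        using less.hyps[of "Suc k"] kN by simp
      have eq: "{j\<in>{k..<N}. bad j} = insert k {j\<in>{Suc k..<N}. bad j}" using kN True by auto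
      have "card {j\<in>{k..<N}. bad j} = Suc (card {j\<in>{Suc k..<N}. bad j})"
        unfolding eq by simp
      moreover have "Y k \<le> Y (Suc k)" using mono[of k 1] by simp
      ultimately show ?thesis using IH by (simp add: algebra_simps)
    next
      case False
      then obtain l where l: "l \<in> {1..L}" "Y (k + l) - Y k \<ge> t * real l" using good by blast
      show ?thesis
      proof (cases "k + l \<le> N")
        case True
        have lt: "N - (k + l) < N - k" using True l(1) by auto
        have IH: "Y N - Y (k + l) \<ge> t * (real N - real (k + l) - real L - real (card {j\<in>{k + l..<N}. bad j}))"
          using less.hyps[OF lt] True by simp
        have "card {j\<in>{k + l..<N}. bad j} \<le> card {j\<in>{k..<N}. bad j}"
          by (rule card_mono) auto
        then have "t * (real N - real k - real L - real (card {j\<in>{k..<N}. bad j}))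
              \<le> t * (real N - real (k + l) - real L - real (card {j\<in>{k + l..<N}. bad j})) + t * real l"
          using t by (simp add: algebra_simps mult_left_mono)
        then show ?thesis using IH l(2) by linarith
      next
        case False
        have "real N - real k - real L - real (card {j\<in>{k..<N}. bad j}) \<le> 0"
          using False l(1) by auto
        then have "t * (real N - real k - real L - real (card {j\<in>{k..<N}. bad j})) \<le> 0"
          using t by (simp add: mult_nonneg_nonpos)
        moreover have "Y k \<le> Y N" using mono[of k "N - k"] kN by simp
        ultimately show ?thesis by linarith
      qed
    qed
  qed
qed

lemma dens_det:
  fixes \<beta> x :: "nat \<Rightarrow> real"
  assumes b0: "\<beta> 0 = 0" and step: "\<And>k. \<beta> (Suc k) \<le> \<beta> k + x k" and a: "a < 0"
    and xpos: "\<And>k. x k \<ge> 0"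
  shows "\<beta> N - a * real (card ({n. \<exists>l\<in>{1..n}. \<beta> n - \<beta> (n - l) \<le> a * real l} \<inter> {1..N}))
           \<le> (\<Sum>i<N. x i)"
proof (induction N rule: less_induct)
  case (less N)
  define E where "E = {n. \<exists>l\<in>{1..n}. \<beta> n - \<beta> (n - l) \<le> a * real l}"
  have less': "\<And>m. m < N \<Longrightarrow> \<beta> m - a * real (card (E \<inter> {1..m})) \<le> (\<Sum>i<m. x i)"
    using less unfolding E_def by blast
  have main: "\<beta> N - a * real (card (E \<inter> {1..N})) \<le> (\<Sum>i<N. x i)"
  proof (cases N)
    case 0 then show ?thesis using b0 by simp
  next
    case (Suc N')
    show ?thesis
    proof (cases "N \<in> E")
      case False
      have eq: "E \<inter> {1..N} = E \<inter> {1..N'}" using False Suc by (auto simp: le_Suc_eq)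
      have "\<beta> N' - a * real (card (E \<inter> {1..N'})) \<le> (\<Sum>i<N'. x i)" using less' Suc by simp
      then show ?thesis using step[of N'] Suc eq by simp
    next
      case True
      then obtain l where l: "l \<in> {1..N}" "\<beta> N - \<beta> (N - l) \<le> a * real l" unfolding E_def by blast
      have IH: "\<beta> (N - l) - a * real (card (E \<inter> {1..N - l})) \<le> (\<Sum>i<N - l. x i)"
        using less' l(1) by simp
      have sub: "E \<inter> {1..N} \<subseteq> (E \<inter> {1..N - l}) \<union> {N - l + 1..N}" by auto
      have "card (E \<inter> {1..N}) \<le> card ((E \<inter> {1..N - l}) \<union> {N - l + 1..N})"
        by (rule card_mono[OF _ sub]) auto
      also have "\<dots> \<le> card (E \<inter> {1..N - l}) + card {N - l + 1..N}" by (rule card_Un_le)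
      also have "card {N - l + 1..N} = l" using l(1) by simp
      finally have c: "real (card (E \<inter> {1..N})) \<le> real (card (E \<inter> {1..N - l})) + real l" by linarith
      have s: "(\<Sum>i<N - l. x i) \<le> (\<Sum>i<N. x i)"
        by (rule sum_mono2) (auto simp: xpos)
      have "- a * real (card (E \<inter> {1..N})) \<le> - a * (real (card (E \<inter> {1..N - l})) + real l)"
        using c a by (intro mult_left_mono) auto
      then show ?thesis using IH s l(2) by (simp add: algebra_simps)
    qed
  qed
  then show ?case unfolding E_def .
qed



lemma density_bound:
  fixes E :: "nat set" and d u K \<delta> :: real
  assumes H: "\<And>N. d * real (card (E \<inter> {1..N})) \<le> u * real N + K"
    and d: "d > 0" and u: "u \<le> \<delta> * d" and dl: "\<delta> > 0" and E0: "0 \<notin> E"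
  shows "upper_density E \<le> ereal \<delta>"
proof -
  have b: "real (card (E \<inter> {0..<N})) / real N \<le> \<delta> + (K / d) / real N" for N
  proof (cases "N = 0")
    case True then show ?thesis using dl by simp
  next
    case False
    have "E \<inter> {0..<N} \<subseteq> E \<inter> {1..N}" using E0 by (auto simp: Suc_le_eq) (metis gr0I)
    then have "card (E \<inter> {0..<N}) \<le> card (E \<inter> {1..N})" by (intro card_mono) auto
    then have "d * real (card (E \<inter> {0..<N})) \<le> u * real N + K"
      using H[of N] d by (smt (verit) mult_left_mono of_nat_le_iff)
    also have "\<dots> \<le> \<delta> * d * real N + K" using u by (intro add_right_mono mult_right_mono) auto
    finally have "real (card (E \<inter> {0..<N})) \<le> (\<delta> * d * real N + K) / d"
      using d by (simp add: field_simps)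
    then have "real (card (E \<inter> {0..<N})) / real N \<le> (\<delta> * d * real N + K) / d / real N"
      using False by (intro divide_right_mono) auto
    also have "\<dots> = \<delta> + (K / d) / real N" using False d by (simp add: field_simps)
    finally show ?thesis .
  qed
  have "upper_density E \<le> limsup (\<lambda>N. ereal (\<delta> + (K / d) / real N))"
    unfolding upper_density_def by (rule Limsup_mono) (use b in auto)
  also have "limsup (\<lambda>N. ereal (\<delta> + (K / d) / real N)) = ereal \<delta>"
  proof (rule lim_imp_Limsup)
    show "((\<lambda>N. ereal (\<delta> + K / d / real N)) \<longlongrightarrow> ereal \<delta>) sequentially"
      unfolding lim_ereal using tendsto_add[OF tendsto_const lim_const_over_n[of "K / d"]] by simp
  qed simp
  finally show ?thesis .
qed



lemma key:
  fixes y :: "nat \<Rightarrow> 'a \<Rightarrow> real" and T :: "'a \<Rightarrow> 'a"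
  assumes PS: "prob_space M" and erg: "ergodic_map M T"
    and meas[measurable]: "\<And>n. y n \<in> borel_measurable M"
    and int: "\<And>n. integrable M (y n)"
    and y0: "\<And>x. x \<in> space M \<Longrightarrow> y 0 x = 0"
    and sup: "AE x in M. \<forall>k l. y k x + y l ((T ^^ k) x) \<le> y (k + l) x"
    and pos: "AE x in M. \<forall>n. 0 \<le> y n x"
    and C: "C \<ge> 0" and intb: "\<And>N. integral\<^sup>L M (y N) \<le> real N * C"
  shows "\<exists>t. AE x in M. \<exists>K::nat. \<forall>N. y N x \<le> t * real N + real K"
proof -
  interpret prob_space M by fact
  have mp: "measure_preserving_map M T" using erg unfolding ergodic_map_def by auto
  have T[measurable]: "T \<in> M \<rightarrow>\<^sub>M M" using mp unfolding measure_preserving_map_def by auto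
  have Tn[measurable]: "\<And>n. T ^^ n \<in> M \<rightarrow>\<^sub>M M" by (rule mp_funpow_meas[OF T])
  define t where "t = 4 * C + 4"
  have t0: "t > 0" using C by (simp add: t_def)
  define S where "S = {x \<in> space M. \<forall>K::nat. \<exists>N. y N x - t * real N > real K}"
  have S[measurable]: "S \<in> sets M" unfolding S_def by measurable
  have subS: "AE x in M. T x \<in> S \<longrightarrow> x \<in> S"
    using sup pos AE_space
  proof eventually_elim
    case (elim x)
    show ?case
    proof
      assume Tx: "T x \<in> S"
      have "\<exists>N. y N x - t * real N > real K" for K
      proof -
        from Tx obtain N where N: "y N (T x) - t * real N > real (K + nat \<lceil>t\<rceil>)"
          unfolding S_def by blast
        have "y 1 x + y N ((T ^^ 1) x) \<le> y (1 + N) x" using elim(1) by blast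
        moreover have "0 \<le> y 1 x" using elim(2) by blast
        ultimately have "y N (T x) \<le> y (Suc N) x" by simp
        moreover have "real (K + nat \<lceil>t\<rceil>) \<ge> real K + t" using t0 by linarith
        ultimately have "y (Suc N) x - t * real (Suc N) > real K" using N by (simp add: algebra_simps)
        then show ?thesis by blast
      qed
      then show "x \<in> S" using elim(3) by (simp add: S_def)
    qed
  qed
  have "measure M S = 0 \<or> measure M S = 1" by (rule inv_01[OF PS erg S subS])
  moreover
  have False if S1: "measure M S = 1"
  proof -
    define B where "B L = {x \<in> space M. \<forall>l\<in>{1..L}. y l x \<le> t * real l}" for L
    have B[measurable]: "\<And>L. B L \<in> sets M" unfolding B_def by measurable
    have dec: "decseq B" unfolding decseq_def B_def by auto
    have "(\<Inter>L. B L) \<subseteq> space M - S"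
    proof
      fix x assume x: "x \<in> (\<Inter>L. B L)"
      then have xs: "x \<in> space M" by (auto simp: B_def)
      have all: "y l x \<le> t * real l" if "l \<ge> 1" for l using x that unfolding B_def by (auto dest!: spec[of _ l])
      have "x \<notin> S"
      proof
        assume "x \<in> S"
        then have "\<exists>N. y N x - t * real N > real (0::nat)" unfolding S_def by blast
        then obtain N where N: "y N x - t * real N > 0" by auto
        show False
        proof (cases "N = 0")
          case True then show False using N y0[OF xs] by simp
        next
          case False then show False using all[of N] N by simp
        qed
      qed
      then show "x \<in> space M - S" using xs by simp
    qed
    then have "measure M (\<Inter>L. B L) \<le> measure M (space M - S)"
      by (intro finite_measure_mono) auto
    also have "\<dots> = 0" using prob_compl[OF S] S1 by simp
    finally have m0: "measure M (\<Inter>L. B L) = 0" by (simp add: measure_nonneg antisym)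
    have "(\<lambda>L. measure M (B L)) \<longlonglongrightarrow> 0"
    proof -
      have "range B \<subseteq> sets M" using B by auto
      from finite_Lim_measure_decseq[OF this dec] show ?thesis using m0 by simp
    qed
    then have "eventually (\<lambda>L. measure M (B L) < 1/4) sequentially"
      by (rule order_tendstoD) simp
    then obtain L where L: "measure M (B L) < 1/4" by (auto simp: eventually_sequentially)
    define cnt where "cnt N x = (\<Sum>j<N. indicator (B L) ((T ^^ j) x) :: real)" for N x
    have posall: "AE x in M. \<forall>k n. 0 \<le> y n ((T ^^ k) x)"
    proof -
      have "\<And>k. AE x in M. \<forall>n. 0 \<le> y n ((T ^^ k) x)" using mp_AE[OF mp pos] by blast
      then show ?thesis by (subst AE_all_countable) auto
    qed
    have ptw: "AE x in M. \<forall>N. y N x \<ge> t * (real N - real L - cnt N x)"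
      using sup posall AE_space
    proof eventually_elim
      case (elim x)
      show ?case
      proof
        fix N
        have mono: "y k x \<le> y (k + j) x" for k j
        proof -
          have "y k x + y j ((T ^^ k) x) \<le> y (k + j) x" using elim(1) by blast
          moreover have "0 \<le> y j ((T ^^ k) x)" using elim(2) by blast
          ultimately show ?thesis by linarith
        qed
        have good: "\<exists>l\<in>{1..L}. y (k + l) x - y k x \<ge> t * real l"
          if "\<not> (T ^^ k) x \<in> B L" for k
        proof -
          have "(T ^^ k) x \<in> space M" using elim(3) by (meson Tn measurable_space)
          then have "\<not> (\<forall>l\<in>{1..L}. y l ((T ^^ k) x) \<le> t * real l)"
            using that unfolding B_def by blast
          then obtain l where l: "l \<in> {1..L}" "y l ((T ^^ k) x) > t * real l"
            by (auto simp: not_le)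
          have "y k x + y l ((T ^^ k) x) \<le> y (k + l) x" using elim(1) by blast
          then show ?thesis using l by (intro bexI[of _ l]) auto
        qed
        have cf: "y N x - y 0 x \<ge> t * (real N - real 0 - real L - real (card {j\<in>{0..<N}. (T ^^ j) x \<in> B L}))"
          by (rule cover_fwd[where bad = "\<lambda>j. (T ^^ j) x \<in> B L"]) (use t0 mono good in auto)
        have "cnt N x = real (card ({..<N} \<inter> {j. (T ^^ j) x \<in> B L}))"
          unfolding cnt_def
          using sum_indicator_eq_card[of "{..<N}" "{j. (T ^^ j) x \<in> B L}"]
          by (simp add: indicator_def)
        also have "{..<N} \<inter> {j. (T ^^ j) x \<in> B L} = {j\<in>{0..<N}. (T ^^ j) x \<in> B L}" by auto
        finally show "y N x \<ge> t * (real N - real L - cnt N x)"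
          using cf y0[OF elim(3)] by simp
      qed
    qed
    define N where "N = nat \<lceil>t * real L\<rceil> + 1"
    have intj: "integrable M (\<lambda>x. indicator (B L) ((T ^^ j) x) :: real)" for j
      by (rule mp_integrable[OF mp, of "indicator (B L)"]) (auto simp: emeasure_eq_measure)
    have intcnt: "integrable M (cnt N)" unfolding cnt_def
      using intj by auto
    have icnt: "integral\<^sup>L M (cnt N) = real N * measure M (B L)"
    proof -
      have "integral\<^sup>L M (cnt N) = (\<Sum>j<N. integral\<^sup>L M (\<lambda>x. indicator (B L) ((T ^^ j) x) :: real))"
        unfolding cnt_def
        using Bochner_Integration.integral_sum[of "{..<N}" M "\<lambda>j x. indicator (B L) ((T ^^ j) x) :: real"] intj by simp
      also have "\<dots> = (\<Sum>j<N. measure M (B L))"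
        by (intro sum.cong refl) (subst mp_integral[OF mp, of "indicator (B L)"], auto)
      finally show ?thesis by simp
    qed
    have "integral\<^sup>L M (\<lambda>x. t * (real N - real L - cnt N x)) \<le> integral\<^sup>L M (y N)"
      by (rule integral_mono_AE) (use int intcnt ptw in auto)
    moreover have "integral\<^sup>L M (\<lambda>x. t * (real N - real L - cnt N x))
        = t * (real N - real L) - t * (real N * measure M (B L))"
      using intcnt icnt by (simp add: algebra_simps prob_space)
    ultimately have ineq: "t * (real N - real L) - t * (real N * measure M (B L)) \<le> real N * C"
      using intb[of N] by linarith
    have "t * (real N * measure M (B L)) \<le> t * (real N * (1/4))"
      using L t0 by (intro mult_left_mono) auto
    then have "t * (real N - real L) - t * (real N * (1/4)) \<le> real N * C" using ineq by linarith
    then have "(2 * C + 3) * real N \<le> t * real L" unfolding t_def by (simp add: algebra_simps)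
    moreover have "real N > t * real L" unfolding N_def by linarith
    moreover have "t * real L \<ge> 0" using t0 by simp
    moreover have "3 * real N \<le> (2 * C + 3) * real N" using C by (intro mult_right_mono) auto
    ultimately show False by linarith
  qed
  ultimately have "measure M S = 0" by blast
  then have "S \<in> null_sets M" using S by (simp add: null_setsI emeasure_eq_measure)
  then have "AE x in M. x \<notin> S" by (rule AE_not_in)
  then have "AE x in M. \<exists>K::nat. \<forall>N. y N x \<le> t * real N + real K"
    using AE_space
  proof eventually_elim
    case (elim x)
    then obtain K :: nat where "\<forall>N. y N x - t * real N \<le> real K" unfolding S_def by (auto simp: not_less)
    then show ?case by (intro exI[of _ K]) (auto simp: algebra_simps)
  qed
  then show ?thesis by blast
qed



lemma enn2ereal_fin: "x < \<infinity> \<Longrightarrow> enn2ereal x = ereal (enn2real x)"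
proof -
  assume "x < \<infinity>"
  then have "x = ennreal (enn2real x)" by simp
  then show ?thesis by (metis enn2real_nonneg enn2ereal_ennreal)
qed

lemma ereal_integral_real:
  fixes f :: "'a \<Rightarrow> real"
  assumes "integrable M f" shows "ereal_integral M f = ereal (integral\<^sup>L M f)"
proof -
  have fin: "(\<integral>\<^sup>+x. ennreal (norm (f x)) \<partial>M) < \<infinity>" using assms[unfolded integrable_iff_bounded] by simp
  have P: "(\<integral>\<^sup>+x. ennreal (f x) \<partial>M) < \<infinity>"
    by (rule le_less_trans[OF _ fin], rule nn_integral_mono) (auto intro: ennreal_leI)
  have Q: "(\<integral>\<^sup>+x. ennreal (- f x) \<partial>M) < \<infinity>"
    by (rule le_less_trans[OF _ fin], rule nn_integral_mono) (auto intro: ennreal_leI)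
  have e: "enn2ereal x = ereal (enn2real x)" if "x < \<infinity>" for x :: ennreal
  proof -
    have "x = ennreal (enn2real x)" using that by simp
    then show ?thesis by (metis enn2real_nonneg enn2ereal_ennreal)
  qed
  show ?thesis unfolding ereal_integral_def real_lebesgue_integral_def[OF assms]
    using e[OF P] e[OF Q] by simp
qed

lemma integrable_from_ereal:
  fixes f :: "'a \<Rightarrow> real"
  assumes meas: "f \<in> borel_measurable M" and P: "(\<integral>\<^sup>+x. ennreal (f x) \<partial>M) < \<infinity>"
    and gt: "ereal_integral M f \<noteq> - \<infinity>"
  shows "integrable M f"
proof -
  have Q: "(\<integral>\<^sup>+x. ennreal (- f x) \<partial>M) < \<infinity>"
  proof (rule ccontr)
    assume "\<not> ?thesis"
    then have "(\<integral>\<^sup>+x. ennreal (- f x) \<partial>M) = \<infinity>" by (simp add: not_less top_unique)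
    then have "ereal_integral M f = - \<infinity>" unfolding ereal_integral_def using enn2ereal_fin[OF P]
      by (simp add: enn2ereal_top)
    then show False using gt by simp
  qed
  have "(\<integral>\<^sup>+x. ennreal (norm (f x)) \<partial>M) = (\<integral>\<^sup>+x. ennreal (f x) + ennreal (- f x) \<partial>M)"
    by (intro nn_integral_cong) (simp add: ennreal_neg abs_real_def)
  also have "\<dots> = (\<integral>\<^sup>+x. ennreal (f x) \<partial>M) + (\<integral>\<^sup>+x. ennreal (- f x) \<partial>M)"
    by (rule nn_integral_add) (use meas in measurable)
  also have "\<dots> < \<infinity>" using P Q by (simp add: less_top)
  finally show ?thesis unfolding integrable_iff_bounded using meas by simp
qed



lemma sum_split_nat: "(\<Sum>i<k + l. h i) = (\<Sum>i<k. h i) + (\<Sum>i<l. h (k + i))" for h :: "nat \<Rightarrow> real"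
  by (induction l) auto

theorem lemma2p1:
  fixes M :: "'a measure" and \<tau> :: "'a \<Rightarrow> 'a" and b :: "nat \<Rightarrow> 'a \<Rightarrow> real"
    and A \<delta> :: real
  assumes "prob_space M"
    and "ergodic_map M \<tau>"
    and "\<And>n. b n \<in> borel_measurable M"
    and "\<And>\<omega>. \<omega> \<in> space M \<Longrightarrow> b 0 \<omega> = 0"
    and "AE \<omega> in M. \<forall>n>0. \<forall>m>0. b (n + m) \<omega> \<le> b n \<omega> + b m ((\<tau> ^^ n) \<omega>)"
    and "integrable M (b 1)"
    and "(INF n\<in>{1..}. ereal_integral M (b n) / ereal (real n)) = ereal A"
    and "\<delta> > 0"
  shows "\<exists>c>0. AE \<omega> in M.
           upper_density {n. \<exists>l\<in>{1..n}. b n \<omega> - b (n - l) \<omega> \<le> (A - c) * real l} \<le> ereal \<delta>"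
proof -
  note PS = assms(1) and erg = assms(2) and bm[measurable] = assms(3) and b0 = assms(4)
    and subadd = assms(5) and int1 = assms(6) and INFA = assms(7) and dpos = assms(8)
  interpret prob_space M by fact
  have mp: "measure_preserving_map M \<tau>" using erg unfolding ergodic_map_def by auto
  have T[measurable]: "\<tau> \<in> M \<rightarrow>\<^sub>M M" using mp unfolding measure_preserving_map_def by auto
  have Tn[measurable]: "\<And>n. \<tau> ^^ n \<in> M \<rightarrow>\<^sub>M M" by (rule mp_funpow_meas[OF T])
  have Tsp: "(\<tau> ^^ n) x \<in> space M" if "x \<in> space M" for n x using that by (meson Tn measurable_space)
  define f where "f = b 1"
  have fm[measurable]: "f \<in> borel_measurable M" unfolding f_def by simp
  define S where "S N x = (\<Sum>i<N. \<bar>f ((\<tau> ^^ i) x)\<bar>)" for N x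
  have Sm[measurable]: "\<And>N. S N \<in> borel_measurable M" unfolding S_def by measurable
  have intfi: "integrable M (\<lambda>x. \<bar>f ((\<tau> ^^ i) x)\<bar>)" for i
    using mp_integrable[OF mp, of "\<lambda>x. \<bar>f x\<bar>" i] int1 by (simp add: f_def)
  have intS: "integrable M (S N)" for N unfolding S_def using intfi by auto
  have iS: "integral\<^sup>L M (S N) = real N * integral\<^sup>L M (\<lambda>x. \<bar>f x\<bar>)" for N
  proof -
    have "integral\<^sup>L M (S N) = (\<Sum>i<N. integral\<^sup>L M (\<lambda>x. \<bar>f ((\<tau> ^^ i) x)\<bar>))"
      unfolding S_def using Bochner_Integration.integral_sum[of "{..<N}" M "\<lambda>i x. \<bar>f ((\<tau> ^^ i) x)\<bar>"] intfi
      by simp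
    also have "\<dots> = (\<Sum>i<N. integral\<^sup>L M (\<lambda>x. \<bar>f x\<bar>))"
      by (intro sum.cong refl) (rule mp_integral[OF mp, of "\<lambda>x. \<bar>f x\<bar>"], simp)
    finally show ?thesis by simp
  qed
  have stepb: "b (Suc k) x \<le> b k x + f ((\<tau> ^^ k) x)"
    if x: "x \<in> space M" "\<forall>n>0. \<forall>m>0. b (n + m) x \<le> b n x + b m ((\<tau> ^^ n) x)" for x k
  proof (cases "k = 0")
    case True then show ?thesis using b0[OF x(1)] by (simp add: f_def)
  next
    case False
    have "b (k + 1) x \<le> b k x + b 1 ((\<tau> ^^ k) x)" using x(2) False by (metis less_numeral_extra(1) not_gr_zero)
    then show ?thesis by (simp add: f_def)
  qed
  have bleS: "b N x \<le> S N x"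
    if x: "x \<in> space M" "\<forall>n>0. \<forall>m>0. b (n + m) x \<le> b n x + b m ((\<tau> ^^ n) x)" for x N
  proof -
    have "b N x \<le> (\<Sum>i<N. f ((\<tau> ^^ i) x))"
    proof (induction N)
      case 0 then show ?case using b0[OF x(1)] by simp
    next
      case (Suc N) then show ?case using stepb[OF x, of N] by simp
    qed
    also have "\<dots> \<le> S N x" unfolding S_def by (intro sum_mono) auto
    finally show ?thesis .
  qed
  have AEbleS: "AE x in M. b N x \<le> S N x" for N
    using subadd AE_space by eventually_elim (rule bleS)
  have intb: "integrable M (b N) \<and> A * real N \<le> integral\<^sup>L M (b N)" if N: "N \<ge> 1" for N
  proof -
    have le: "ereal A \<le> ereal_integral M (b N) / ereal (real N)"
      using INFA N by (metis INF_lower atLeast_iff)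
    have P: "(\<integral>\<^sup>+x. ennreal (b N x) \<partial>M) < \<infinity>"
    proof -
      have "(\<integral>\<^sup>+x. ennreal (b N x) \<partial>M) \<le> (\<integral>\<^sup>+x. ennreal (S N x) \<partial>M)"
        by (rule nn_integral_mono_AE) (use AEbleS[of N] in \<open>eventually_elim, auto intro: ennreal_leI\<close>)
      also have "\<dots> = ennreal (integral\<^sup>L M (S N))"
        by (rule nn_integral_eq_integral[OF intS]) (auto simp: S_def intro!: sum_nonneg)
      also have "\<dots> < \<infinity>" by simp
      finally show ?thesis .
    qed
    have ne: "ereal_integral M (b N) \<noteq> - \<infinity>"
    proof
      assume "ereal_integral M (b N) = - \<infinity>"
      then show False using le N by simp
    qed
    have ib: "integrable M (b N)" by (rule integrable_from_ereal[OF bm P ne])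
    have "ereal A \<le> ereal (integral\<^sup>L M (b N) / real N)"
      using le N by (simp add: ereal_integral_real[OF ib])
    then have "A \<le> integral\<^sup>L M (b N) / real N" by simp
    then show ?thesis using ib N by (simp add: field_simps)
  qed
  have intbN: "integrable M (b N)" for N
  proof (cases "N = 0")
    case True
    have "integrable M (\<lambda>x. 0::real)" by simp
    moreover have "integrable M (b 0) = integrable M (\<lambda>x. 0::real)"
      using b0 by (intro Bochner_Integration.integrable_cong) auto
    ultimately show ?thesis using True by simp
  next
    case False then show ?thesis using intb[of N] by simp
  qed
  define y where "y N x = S N x - b N x" for N x
  define C where "C = integral\<^sup>L M (\<lambda>x. \<bar>f x\<bar>) - A"
  have ym[measurable]: "\<And>N. y N \<in> borel_measurable M" unfolding y_def by measurable
  have yint: "\<And>N. integrable M (y N)" unfolding y_def using intS intbN by auto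
  have y0: "\<And>x. x \<in> space M \<Longrightarrow> y 0 x = 0" unfolding y_def S_def using b0 by simp
  have ysup: "AE x in M. \<forall>k l. y k x + y l ((\<tau> ^^ k) x) \<le> y (k + l) x"
    using subadd AE_space
  proof eventually_elim
    case (elim x)
    show ?case
    proof (intro allI)
      fix k l
      have Seq: "S (k + l) x = S k x + S l ((\<tau> ^^ k) x)"
        unfolding S_def sum_split_nat by (simp add: funpow_add add.commute)
      have "b (k + l) x \<le> b k x + b l ((\<tau> ^^ k) x)"
      proof (cases "k = 0 \<or> l = 0")
        case True then show ?thesis using b0[OF elim(2)] b0[OF Tsp[OF elim(2), of k]] by auto
      next
        case False then show ?thesis using elim(1) by auto
      qed
      then show "y k x + y l ((\<tau> ^^ k) x) \<le> y (k + l) x" unfolding y_def Seq by simp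
    qed
  qed
  have ypos: "AE x in M. \<forall>n. 0 \<le> y n x"
    using subadd AE_space by eventually_elim (auto simp: y_def dest: bleS)
  have A1: "A \<le> integral\<^sup>L M f" using intb[of 1] by (simp add: f_def)
  have "integral\<^sup>L M f \<le> integral\<^sup>L M (\<lambda>x. \<bar>f x\<bar>)"
    using int1 by (intro integral_mono) (auto simp: f_def)
  with A1 have C0: "C \<ge> 0" by (simp add: C_def)
  have yb: "integral\<^sup>L M (y N) \<le> real N * C" for N
  proof (cases "N = 0")
    case True
    have "integral\<^sup>L M (y N) = integral\<^sup>L M (\<lambda>x. 0)"
      using True y0 by (intro Bochner_Integration.integral_cong) auto
    then show ?thesis using True by simp
  next
    case False
    have "integral\<^sup>L M (y N) = real N * integral\<^sup>L M (\<lambda>x. \<bar>f x\<bar>) - integral\<^sup>L M (b N)"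
      unfolding y_def using intS intbN iS by simp
    also have "\<dots> \<le> real N * C" using intb[of N] False by (simp add: C_def algebra_simps)
    finally show ?thesis .
  qed
  obtain t where t: "AE x in M. \<exists>K::nat. \<forall>N. y N x \<le> t * real N + real K"
    using key[OF PS erg ym yint y0 ysup ypos C0 yb] by blast
  define c where "c = \<bar>A\<bar> + \<bar>t\<bar> / \<delta> + 1"
  have cpos: "c > 0" unfolding c_def using dpos by (simp add: add_nonneg_pos)
  have dA: "c - A > 0" unfolding c_def using dpos by (smt (verit) abs_ge_self divide_nonneg_pos abs_ge_zero)
  have ut: "\<bar>t\<bar> \<le> \<delta> * (c - A)"
  proof -
    have "\<bar>t\<bar> / \<delta> \<le> c - A" unfolding c_def by (smt (verit) abs_ge_self)
    then show ?thesis using dpos by (simp add: field_simps)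
  qed
  have "AE x in M. upper_density {n. \<exists>l\<in>{1..n}. b n x - b (n - l) x \<le> (A - c) * real l} \<le> ereal \<delta>"
    using subadd AE_space t
  proof eventually_elim
    case (elim x)
    then obtain K :: nat where K: "\<And>N. y N x \<le> t * real N + real K" by blast
    define E where "E = {n. \<exists>l\<in>{1..n}. b n x - b (n - l) x \<le> (A - c) * real l}"
    have dd: "b N x - (A - c) * real (card (E \<inter> {1..N})) \<le> (\<Sum>i<N. \<bar>f ((\<tau> ^^ i) x)\<bar>)" for N
      unfolding E_def
    proof (rule dens_det[where \<beta> = "\<lambda>n. b n x" and x = "\<lambda>i. \<bar>f ((\<tau> ^^ i) x)\<bar>"])
      show "b 0 x = 0" using b0[OF elim(2)] .
      show "b (Suc k) x \<le> b k x + \<bar>f ((\<tau> ^^ k) x)\<bar>" for k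
        using stepb[OF elim(2) elim(1), of k] by simp
      show "A - c < 0" using dA by simp
    qed auto
    have H: "(c - A) * real (card (E \<inter> {1..N})) \<le> \<bar>t\<bar> * real N + real K" for N
    proof -
      have "(c - A) * real (card (E \<inter> {1..N})) \<le> y N x"
        using dd[of N] unfolding y_def S_def by (simp add: algebra_simps)
      also have "\<dots> \<le> t * real N + real K" by (rule K)
      also have "\<dots> \<le> \<bar>t\<bar> * real N + real K" by (intro add_right_mono mult_right_mono) auto
      finally show ?thesis .
    qed
    have "0 \<notin> E" unfolding E_def by auto
    then show ?case unfolding E_def[symmetric]
      by (intro density_bound[OF H dA ut dpos])
  qed
  then show ?thesis using cpos by blast
qed

end
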